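(* In the setting of the context, let $n$ be an iteration index with $R_n=\|Ax_n-y\|\neq0$. Then there exist $t\in\mathbb{R}^{N_n}$ and $S_n>0$ with $h_n(t)\le h_n(0)-S_n$; equivalently, for every $z\in M$ the next iterate satisfies $D_p(x_{n+1},z)\le D_p(x_n,z)-S_n$.
   Context: $X$ is a real smooth, uniformly convex Banach space, $Y$ a real Banach space, $A:X\to Y$ bounded linear with adjoint $A^*$, $y\in\mathcal{R}(A)$, $M=\{x:Ax=y\}$. Fix $p,r\in(1,\infty)$, $p^*=p/(p-1)$. $J_p:X\to X^*$ is the duality mapping with gauge $t^{p-1}$ ($\langle J_p(x),x\rangle=\|x\|^p$, $\|J_p(x)\|=\|x\|^{p-1}$), $J_{p^*}:X^*\to X$ that of $X^*$ with gauge $t^{p^*-1}$ (inverse of $J_p$), $J_r^Y$ a single-valued selection of the duality mapping of $Y$ with gauge $t^{r-1}$. Bregman distance: $D_p(x,z)=\tfrac1{p^*}\|x\|^p-\langle J_p(x),z\rangle+\tfrac1p\|z\|^p$. Method: choose $x_0$ with $J_p(x_0)\in\overline{\mathcal{R}(A^* )}$, fix $N\in\mathbb{N}$, $N_n=\min(N,n+1)$. For $n=0,1,\dots$: $w_n=Ax_n-y$, $R_n=\|w_n\|$; stop if $R_n=0$. Else $u_n^*=J_r^Y(w_n)$, $u_n=A^*u_n^*$. Let $s_n$ minimize $s\mapsto\|u_n-\sum_{i=1}^{N_{n-1}}s_iv_{n-1,i}\|^{p^*}$ (empty sum for $n=0$), set $v_{n,N_n}=u_n-\sum_k s_{n,k}v_{n-1,k}$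 with precursor $w^*_{n,N_n}=u_n^*-\sum_k s_{n,k}w^*_{n-1,k}$; $v_{n,1},\dots,v_{n,N_n-1}$ (with precursors) are the last $N_n-1$ entries of the previous list, in order. Offsets $\beta_{n,k}=\langle w^*_{n,k},y\rangle$. $h_n(t)=\tfrac1{p^*}\|J_p(x_n)-\sum_{k=1}^{N_n}t_kv_{n,k}\|^{p^*}+\sum_k t_k\beta_{n,k}$; $t_n$ minimizes $h_n$ and $x_{n+1}=J_{p^*}(J_p(x_n)-\sum_k t_{n,k}v_{n,k})$. *)

theory Defs
  imports "HOL-Analysis.Analysis"
begin

definition conj_exp :: "real \<Rightarrow> real" where
  "conj_exp p = p / (p - 1)"

definition duality_set :: "real \<Rightarrow> 'a::real_normed_vector \<Rightarrow> ('a \<Rightarrow>\<^sub>L real) set" where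
  "duality_set q x = {f. blinfun_apply f x = norm x powr q \<and> norm f = norm x powr (q - 1)}"

text \<open>Duality mapping of the dual space X* with gauge t^(q-1), with X** identified with X
  (X is reflexive, being uniformly convex).\<close>
definition dual_duality_set :: "real \<Rightarrow> ('a::real_normed_vector \<Rightarrow>\<^sub>L real) \<Rightarrow> 'a set" where
  "dual_duality_set q f = {x. blinfun_apply f x = norm f powr q \<and> norm x = norm f powr (q - 1)}"

definition uniformly_convex_space :: "'a::real_normed_vector itself \<Rightarrow> bool" where
  "uniformly_convex_space _ \<longleftrightarrow>
     (\<forall>\<epsilon>. 0 < \<epsilon> \<and> \<epsilon> \<le> 2 \<longrightarrow> (\<exists>\<delta>>0. \<forall>x y::'a. norm x \<le> 1 \<and> norm y \<le> 1 \<and> norm (x - y) \<ge> \<epsilon>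
        \<longrightarrow> norm ((1/2) *\<^sub>R (x + y)) \<le> 1 - \<delta>))"

definition smooth_space :: "'a::real_normed_vector itself \<Rightarrow> bool" where
  "smooth_space _ \<longleftrightarrow>
     (\<forall>x::'a. x \<noteq> 0 \<longrightarrow> (\<exists>!f::'a \<Rightarrow>\<^sub>L real. norm f = 1 \<and> blinfun_apply f x = norm x))"

definition adj :: "('a::real_normed_vector \<Rightarrow>\<^sub>L 'b::real_normed_vector) \<Rightarrow> ('b \<Rightarrow>\<^sub>L real) \<Rightarrow> ('a \<Rightarrow>\<^sub>L real)" where
  "adj A u = u o\<^sub>L A"

definition bregman :: "real \<Rightarrow> ('a::real_normed_vector \<Rightarrow> ('a \<Rightarrow>\<^sub>L real)) \<Rightarrow> 'a \<Rightarrow> 'a \<Rightarrow> real" where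
  "bregman p J x z = (1 / conj_exp p) * norm x powr p - blinfun_apply (J x) z + (1 / p) * norm z powr p"

definition Nn :: "nat \<Rightarrow> nat \<Rightarrow> nat" where
  "Nn N n = min N (n + 1)"

text \<open>h_n(t) = 1/p* ||J_p(x_n) - sum_{k=1}^{m} t_k v_k||^{p*} + sum_k t_k beta_k,
  for t ranging over R^m, represented as nat \<Rightarrow> real (only coordinates 1..m matter).\<close>
definition hfun :: "real \<Rightarrow> ('a::real_normed_vector \<Rightarrow>\<^sub>L real) \<Rightarrow> nat \<Rightarrow> (nat \<Rightarrow> ('a \<Rightarrow>\<^sub>L real))
                     \<Rightarrow> (nat \<Rightarrow> real) \<Rightarrow> (nat \<Rightarrow> real) \<Rightarrow> real" where
  "hfun p Jx m vs \<beta> t =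
     (1 / conj_exp p) * norm (Jx - (\<Sum>k=1..m. t k *\<^sub>R vs k)) powr conj_exp p + (\<Sum>k=1..m. t k * \<beta> k)"

end

theory Submission
  imports Defs
begin

lemma subgrad:
  fixes f g :: "'a::real_normed_vector \<Rightarrow>\<^sub>L real"
  assumes q: "1 < q" and x: "x \<in> dual_duality_set q f"
  shows "(1/q) * norm f powr q + blinfun_apply g x - blinfun_apply f x \<le> (1/q) * norm g powr q"
proof -
  have fx: "blinfun_apply f x = norm f powr q" and nx: "norm x = norm f powr (q - 1)"
    using x by (auto simp: dual_duality_set_def)
  define q' where "q' = q / (q - 1)"
  have q'1: "q' > 1" using q by (simp add: q'_def)
  have sum1: "1/q + 1/q' = 1" using q by (simp add: q'_def field_simps)
  have "blinfun_apply g x \<le> norm g * norm x"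
    by (metis abs_le_D1 norm_blinfun real_norm_def)
  also have "\<dots> \<le> norm g powr q / q + norm x powr q' / q'"
    by (rule Youngs_inequality[OF q q'1 sum1]) auto
  also have "norm x powr q' = norm f powr q"
    using q by (simp add: nx powr_powr q'_def)
  finally have "blinfun_apply g x \<le> norm g powr q / q + norm f powr q / q'" .
  moreover have "norm f powr q / q' = norm f powr q - (1/q) * norm f powr q"
  proof -
    have "1/q' = 1 - 1/q" using sum1 by simp
    hence "norm f powr q / q' = norm f powr q * (1 - 1/q)" by (simp add: divide_inverse)
    thus ?thesis by (simp add: algebra_simps)
  qed
  ultimately show ?thesis using fx by simp
qed

lemma uc_scaled:
  assumes uc: "uniformly_convex_space TYPE('a::real_normed_vector)" and e: "0 < e" "e \<le> 2"
  shows "\<exists>d>0. \<forall>(x::'a) y R. 0 < R \<and> norm x \<le> R \<and> norm y \<le> R \<and> e * R \<le> norm (x - y)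
            \<longrightarrow> norm ((1/2) *\<^sub>R (x + y)) \<le> (1 - d) * R"
proof -
  obtain d where d: "d > 0" and H: "\<And>x y::'a. norm x \<le> 1 \<Longrightarrow> norm y \<le> 1 \<Longrightarrow> norm (x - y) \<ge> e
        \<Longrightarrow> norm ((1/2) *\<^sub>R (x + y)) \<le> 1 - d"
  proof -
    from uc have "\<exists>\<delta>>0. \<forall>x y::'a. norm x \<le> 1 \<and> norm y \<le> 1 \<and> norm (x - y) \<ge> e
        \<longrightarrow> norm ((1/2) *\<^sub>R (x + y)) \<le> 1 - \<delta>"
      using e unfolding uniformly_convex_space_def by simp
    thus ?thesis using that by meson
  qed
  have "norm ((1/2) *\<^sub>R (x + y)) \<le> (1 - d) * R"
    if R: "0 < R" and nx: "norm x \<le> R" and ny: "norm y \<le> R" and exy: "e * R \<le> norm (x - y)" for x y :: 'a and R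
  proof -
    have nsc: "norm ((1/R) *\<^sub>R z) = norm z / R" for z :: 'a using R by simp
    have a: "norm ((1/R) *\<^sub>R x) \<le> 1" using R nx unfolding nsc by simp
    have b: "norm ((1/R) *\<^sub>R y) \<le> 1" using R ny unfolding nsc by simp
    have "(1/R) *\<^sub>R x - (1/R) *\<^sub>R y = (1/R) *\<^sub>R (x - y)" by (simp add: scaleR_diff_right)
    hence c: "norm ((1/R) *\<^sub>R x - (1/R) *\<^sub>R y) \<ge> e" using R exy unfolding nsc
      by (simp add: le_divide_eq)
    have "(1/2) *\<^sub>R ((1/R) *\<^sub>R x + (1/R) *\<^sub>R y) = (1/R) *\<^sub>R ((1/2) *\<^sub>R (x + y))"
      by (simp add: scaleR_add_right mult.commute)
    hence "norm ((1/R) *\<^sub>R ((1/2) *\<^sub>R (x + y))) \<le> 1 - d" using H[OF a b c] by simp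
    hence "norm ((1/2) *\<^sub>R (x + y)) / R \<le> 1 - d" unfolding nsc .
    thus ?thesis using R by (simp add: divide_le_eq)
  qed
  thus ?thesis using d by blast
qed

lemma Jps_cont:
  fixes Jps :: "('a::real_normed_vector \<Rightarrow>\<^sub>L real) \<Rightarrow> 'a"
  assumes uc: "uniformly_convex_space TYPE('a)" and q: "1 < q"
    and Jd: "\<forall>f. Jps f \<in> dual_duality_set q f"
    and g: "(g \<longlongrightarrow> f0) F"
  shows "((\<lambda>t. Jps (g t)) \<longlongrightarrow> Jps f0) F"
proof -
  have nJ: "norm (Jps f) = norm f powr (q - 1)" for f using Jd by (auto simp: dual_duality_set_def)
  have aJ: "blinfun_apply f (Jps f) = norm f powr q" for f using Jd by (auto simp: dual_duality_set_def)
  have ng: "((\<lambda>t. norm (g t)) \<longlongrightarrow> norm f0) F" by (rule tendsto_norm[OF g])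
  have nx: "((\<lambda>t. norm (Jps (g t))) \<longlongrightarrow> norm f0 powr (q - 1)) F"
    unfolding nJ using q by (intro tendsto_powr2[OF ng tendsto_const]) auto
  show ?thesis
  proof (cases "f0 = 0")
    case True
    hence "((\<lambda>t. norm (Jps (g t))) \<longlongrightarrow> 0) F" using nx q by simp
    hence "((\<lambda>t. Jps (g t)) \<longlongrightarrow> 0) F" by (simp add: tendsto_norm_zero_iff)
    moreover have "Jps f0 = 0" using nJ[of f0] True q by simp
    ultimately show ?thesis by simp
  next
    case False
    define c where "c = norm f0"
    define \<rho> where "\<rho> = c powr (q - 1)"
    have c0: "c > 0" using False by (simp add: c_def)
    have r0: "\<rho> > 0" using c0 by (simp add: \<rho>_def)
    have cq: "c powr q = c * \<rho>"
      using c0 by (simp add: \<rho>_def powr_diff)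
    have nx0: "norm (Jps f0) = \<rho>" using nJ by (simp add: \<rho>_def c_def)
    have nx': "((\<lambda>t. norm (Jps (g t))) \<longlongrightarrow> \<rho>) F" using nx by (simp add: \<rho>_def c_def)
    have t1: "((\<lambda>t. blinfun_apply (g t) (Jps (g t))) \<longlongrightarrow> c powr q) F"
      unfolding aJ c_def using q by (intro tendsto_powr2[OF ng tendsto_const]) auto
    have t2: "((\<lambda>t. blinfun_apply (g t - f0) (Jps (g t))) \<longlongrightarrow> 0) F"
    proof (rule Lim_null_comparison)
      show "\<forall>\<^sub>F t in F. norm (blinfun_apply (g t - f0) (Jps (g t))) \<le> norm (g t - f0) * norm (Jps (g t))"
        by (intro always_eventually allI norm_blinfun)
      have "((\<lambda>t. g t - f0) \<longlongrightarrow> 0) F" using g by (simp add: LIM_zero)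
      hence "((\<lambda>t. norm (g t - f0)) \<longlongrightarrow> 0) F" by (simp add: tendsto_norm_zero_iff)
      from tendsto_mult[OF this nx'] show "((\<lambda>t. norm (g t - f0) * norm (Jps (g t))) \<longlongrightarrow> 0) F" by simp
    qed
    have fx: "((\<lambda>t. blinfun_apply f0 (Jps (g t))) \<longlongrightarrow> c powr q) F"
    proof -
      have "((\<lambda>t. blinfun_apply (g t) (Jps (g t)) - blinfun_apply (g t - f0) (Jps (g t))) \<longlongrightarrow> c powr q - 0) F"
        by (intro tendsto_diff t1 t2)
      thus ?thesis by (simp add: blinfun.diff_left)
    qed
    show ?thesis
      unfolding tendsto_iff
    proof (intro allI impI)
      fix \<epsilon> :: real assume e: "\<epsilon> > 0"
      define e' where "e' = min (\<epsilon> / (2 * \<rho>)) 2"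
      have e'0: "0 < e'" "e' \<le> 2" using e r0 by (auto simp: e'_def)
      obtain d where d: "d > 0" and UC: "\<And>(x::'a) y R. 0 < R \<Longrightarrow> norm x \<le> R \<Longrightarrow> norm y \<le> R \<Longrightarrow> e' * R \<le> norm (x - y)
            \<Longrightarrow> norm ((1/2) *\<^sub>R (x + y)) \<le> (1 - d) * R"
        using uc_scaled[OF uc e'0] by blast
      define Rt where "Rt t = max (norm (Jps (g t))) (norm (Jps f0))" for t
      have Rt: "(Rt \<longlongrightarrow> \<rho>) F"
        unfolding Rt_def using tendsto_max[OF nx' tendsto_const[of "norm (Jps f0)"]] nx0 by simp
      define mid where "mid t = blinfun_apply f0 ((1/2) *\<^sub>R (Jps (g t) + Jps f0))" for t
      have mid: "(mid \<longlongrightarrow> c powr q) F"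
      proof -
        have "((\<lambda>t. (1/2) * (blinfun_apply f0 (Jps (g t)) + blinfun_apply f0 (Jps f0))) \<longlongrightarrow> (1/2) * (c powr q + c powr q)) F"
          by (intro tendsto_intros fx) (simp add: aJ c_def)
        thus ?thesis unfolding mid_def by (simp add: blinfun.scaleR_right blinfun.add_right)
      qed
      have "((\<lambda>t. mid t - c * (1 - d) * Rt t) \<longlongrightarrow> c powr q - c * (1 - d) * \<rho>) F"
        by (intro tendsto_intros mid Rt)
      moreover have "c powr q - c * (1 - d) * \<rho> > 0" using cq c0 r0 d by simp
      ultimately have ev1: "\<forall>\<^sub>F t in F. mid t - c * (1 - d) * Rt t > 0"
        by (rule order_tendstoD(1))
      have ev2: "\<forall>\<^sub>F t in F. Rt t < 2 * \<rho>" using order_tendstoD(2)[OF Rt] r0 by simp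
      show "\<forall>\<^sub>F t in F. dist (Jps (g t)) (Jps f0) < \<epsilon>"
        using ev1 ev2
      proof eventually_elim
        case (elim t)
        have R0: "Rt t > 0" using r0 nx0 by (simp add: Rt_def)
        have lt: "norm (Jps (g t) - Jps f0) < e' * Rt t"
        proof (rule ccontr)
          assume "\<not> ?thesis"
          hence "e' * Rt t \<le> norm (Jps (g t) - Jps f0)" by simp
          hence "norm ((1/2) *\<^sub>R (Jps (g t) + Jps f0)) \<le> (1 - d) * Rt t"
            by (intro UC R0) (auto simp: Rt_def)
          moreover have "mid t \<le> c * norm ((1/2) *\<^sub>R (Jps (g t) + Jps f0))"
            unfolding mid_def c_def by (metis abs_le_D1 norm_blinfun real_norm_def)
          ultimately have "mid t \<le> c * ((1 - d) * Rt t)"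
            using c0 by (smt (verit) mult_left_mono)
          thus False using elim by (simp add: algebra_simps)
        qed
        have "e' * Rt t \<le> (\<epsilon> / (2 * \<rho>)) * Rt t" using R0 by (intro mult_right_mono) (auto simp: e'_def)
        also have "\<dots> < (\<epsilon> / (2 * \<rho>)) * (2 * \<rho>)" using elim e r0 by (intro mult_strict_left_mono) auto
        also have "\<dots> = \<epsilon>" using r0 by simp
        finally show ?case using lt by (simp add: dist_norm)
      qed
    qed
  qed
qed

lemma dir_deriv:
  fixes Jps :: "('a::real_normed_vector \<Rightarrow>\<^sub>L real) \<Rightarrow> 'a"
  assumes uc: "uniformly_convex_space TYPE('a)" and q: "1 < q"
    and Jd: "\<forall>f. Jps f \<in> dual_duality_set q f"
  shows "((\<lambda>\<delta>. ((1/q) * norm (f0 + \<delta> *\<^sub>R u) powr q - (1/q) * norm f0 powr q) / \<delta>)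
          \<longlongrightarrow> blinfun_apply u (Jps f0)) (at_right 0)"
proof (rule tendsto_sandwich)
  show "\<forall>\<^sub>F \<delta> in at_right 0. blinfun_apply u (Jps f0) \<le> ((1/q) * norm (f0 + \<delta> *\<^sub>R u) powr q - (1/q) * norm f0 powr q) / \<delta>"
    using eventually_at_right_less[of "0::real"]
  proof eventually_elim
    case (elim \<delta>)
    have "(1/q) * norm f0 powr q + blinfun_apply (f0 + \<delta> *\<^sub>R u) (Jps f0) - blinfun_apply f0 (Jps f0)
          \<le> (1/q) * norm (f0 + \<delta> *\<^sub>R u) powr q"
      using Jd by (intro subgrad q) auto
    hence "\<delta> * blinfun_apply u (Jps f0) \<le> (1/q) * norm (f0 + \<delta> *\<^sub>R u) powr q - (1/q) * norm f0 powr q"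
      by (simp add: blinfun.add_left blinfun.scaleR_left)
    thus ?case using elim by (simp add: le_divide_eq mult.commute)
  qed
  show "\<forall>\<^sub>F \<delta> in at_right 0. ((1/q) * norm (f0 + \<delta> *\<^sub>R u) powr q - (1/q) * norm f0 powr q) / \<delta>
          \<le> blinfun_apply u (Jps (f0 + \<delta> *\<^sub>R u))"
    using eventually_at_right_less[of "0::real"]
  proof eventually_elim
    case (elim \<delta>)
    have "(1/q) * norm (f0 + \<delta> *\<^sub>R u) powr q + blinfun_apply f0 (Jps (f0 + \<delta> *\<^sub>R u))
            - blinfun_apply (f0 + \<delta> *\<^sub>R u) (Jps (f0 + \<delta> *\<^sub>R u))
          \<le> (1/q) * norm f0 powr q"
      using Jd by (intro subgrad q) auto
    hence "(1/q) * norm (f0 + \<delta> *\<^sub>R u) powr q - (1/q) * norm f0 powr q \<le> \<delta> * blinfun_apply u (Jps (f0 + \<delta> *\<^sub>R u))"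
      by (simp add: blinfun.add_left blinfun.scaleR_left)
    thus ?case using elim by (simp add: divide_le_eq mult.commute)
  qed
  show "((\<lambda>\<delta>. blinfun_apply u (Jps f0)) \<longlongrightarrow> blinfun_apply u (Jps f0)) (at_right 0)" by simp
  have "((\<lambda>\<delta>::real. f0 + \<delta> *\<^sub>R u) \<longlongrightarrow> f0 + 0 *\<^sub>R u) (at_right 0)"
    by (intro tendsto_intros tendsto_ident_at)
  hence "((\<lambda>\<delta>::real. f0 + \<delta> *\<^sub>R u) \<longlongrightarrow> f0) (at_right 0)" by simp
  from Jps_cont[OF uc q Jd this]
  show "((\<lambda>\<delta>. blinfun_apply u (Jps (f0 + \<delta> *\<^sub>R u))) \<longlongrightarrow> blinfun_apply u (Jps f0)) (at_right 0)"
    by (intro blinfun.tendsto tendsto_const)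
qed

lemma first_order_ge:
  fixes Jps :: "('a::real_normed_vector \<Rightarrow>\<^sub>L real) \<Rightarrow> 'a"
  assumes uc: "uniformly_convex_space TYPE('a)" and q: "1 < q"
    and Jd: "\<forall>f. Jps f \<in> dual_duality_set q f"
    and H: "\<forall>\<delta>>0. (1/q) * norm f0 powr q \<le> (1/q) * norm (f0 + \<delta> *\<^sub>R u) powr q + \<delta> * b"
  shows "0 \<le> blinfun_apply u (Jps f0) + b"
proof -
  have "- b \<le> blinfun_apply u (Jps f0)"
  proof (rule tendsto_le[OF _ dir_deriv[OF uc q Jd] tendsto_const])
    show "at_right (0::real) \<noteq> bot" by simp
    show "\<forall>\<^sub>F \<delta> in at_right 0. - b \<le> ((1/q) * norm (f0 + \<delta> *\<^sub>R u) powr q - (1/q) * norm f0 powr q) / \<delta>"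
      using eventually_at_right_less[of "0::real"]
    proof eventually_elim
      case (elim \<delta>)
      thus ?case using H by (simp add: le_divide_eq) (smt (verit) mult.commute mult_minus_left)
    qed
  qed
  thus ?thesis by simp
qed

lemma descent:
  fixes Jps :: "('a::real_normed_vector \<Rightarrow>\<^sub>L real) \<Rightarrow> 'a"
  assumes uc: "uniformly_convex_space TYPE('a)" and q: "1 < q"
    and Jd: "\<forall>f. Jps f \<in> dual_duality_set q f"
    and neg: "blinfun_apply u (Jps f0) + b < 0"
  shows "\<exists>\<delta>>0. (1/q) * norm (f0 + \<delta> *\<^sub>R u) powr q + \<delta> * b < (1/q) * norm f0 powr q"
proof -
  have "((\<lambda>\<delta>. ((1/q) * norm (f0 + \<delta> *\<^sub>R u) powr q - (1/q) * norm f0 powr q) / \<delta> + b)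
          \<longlongrightarrow> blinfun_apply u (Jps f0) + b) (at_right 0)"
    by (intro tendsto_add dir_deriv[OF uc q Jd] tendsto_const)
  from order_tendstoD(2)[OF this neg]
  have "\<forall>\<^sub>F \<delta> in at_right 0. 0 < \<delta> \<and> ((1/q) * norm (f0 + \<delta> *\<^sub>R u) powr q - (1/q) * norm f0 powr q) / \<delta> + b < 0"
    using eventually_at_right_less[of "0::real"] by eventually_elim auto
  then obtain \<delta> where d: "0 < \<delta>" and L: "((1/q) * norm (f0 + \<delta> *\<^sub>R u) powr q - (1/q) * norm f0 powr q) / \<delta> + b < 0"
    using eventually_happens[of _ "at_right (0::real)"] by auto
  have "((1/q) * norm (f0 + \<delta> *\<^sub>R u) powr q - (1/q) * norm f0 powr q) / \<delta> < - b" using L by simp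
  hence "(1/q) * norm (f0 + \<delta> *\<^sub>R u) powr q - (1/q) * norm f0 powr q < - b * \<delta>"
    using d by (simp add: divide_less_eq)
  thus ?thesis using d by (intro exI[of _ \<delta>]) (simp add: algebra_simps)
qed

lemma adj_lin:
  "adj A (a - (\<Sum>k\<in>S. c k *\<^sub>R b k)) = adj A a - (\<Sum>k\<in>S. c k *\<^sub>R adj A (b k))"
  unfolding adj_def
  by (rule blinfun_eqI) (simp add: blinfun.diff_left blinfun.sum_left blinfun.scaleR_left)

lemma adj_apply: "blinfun_apply (adj A u) z = blinfun_apply u (blinfun_apply A z)"
  by (simp add: adj_def)

lemma hfun_shift:
  assumes k: "k \<in> {1..m}"
  shows "hfun p Jx m vs \<beta> (\<lambda>i. \<tau> i + (if i = k then d else 0))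
     = (1/conj_exp p) * norm ((Jx - (\<Sum>i=1..m. \<tau> i *\<^sub>R vs i)) + (-d) *\<^sub>R vs k) powr conj_exp p
       + (\<Sum>i=1..m. \<tau> i * \<beta> i) + d * \<beta> k"
proof -
  have s1: "(\<Sum>i=1..m. (\<tau> i + (if i = k then d else 0)) *\<^sub>R vs i) = (\<Sum>i=1..m. \<tau> i *\<^sub>R vs i) + d *\<^sub>R vs k"
  proof -
    have "(\<Sum>i=1..m. (\<tau> i + (if i = k then d else 0)) *\<^sub>R vs i)
        = (\<Sum>i=1..m. \<tau> i *\<^sub>R vs i) + (\<Sum>i=1..m. (if i = k then d *\<^sub>R vs k else 0))"
      by (subst sum.distrib[symmetric], rule sum.cong) (auto simp: scaleR_add_left)
    also have "(\<Sum>i=1..m. (if i = k then d *\<^sub>R vs k else 0)) = d *\<^sub>R vs k"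
      using k by (simp add: sum.delta)
    finally show ?thesis .
  qed
  have s2: "(\<Sum>i=1..m. (\<tau> i + (if i = k then d else 0)) * \<beta> i) = (\<Sum>i=1..m. \<tau> i * \<beta> i) + d * \<beta> k"
  proof -
    have "(\<Sum>i=1..m. (\<tau> i + (if i = k then d else 0)) * \<beta> i)
        = (\<Sum>i=1..m. \<tau> i * \<beta> i) + (\<Sum>i=1..m. (if i = k then d * \<beta> k else 0))"
      by (subst sum.distrib[symmetric], rule sum.cong) (auto simp: distrib_right)
    also have "(\<Sum>i=1..m. (if i = k then d * \<beta> k else 0)) = d * \<beta> k"
      using k by (simp add: sum.delta)
    finally show ?thesis .
  qed
  show ?thesis unfolding hfun_def s1 s2
    by (simp add: algebra_simps)
qed

theorem mainTheorem2:
  fixes A :: "'a::banach \<Rightarrow>\<^sub>L 'b::banach"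
    and y :: 'b
    and p r :: real
    and J :: "'a \<Rightarrow> ('a \<Rightarrow>\<^sub>L real)"
    and Jps :: "('a \<Rightarrow>\<^sub>L real) \<Rightarrow> 'a"
    and Jr :: "'b \<Rightarrow> ('b \<Rightarrow>\<^sub>L real)"
    and N n :: nat
    and x :: "nat \<Rightarrow> 'a"
    and s tt :: "nat \<Rightarrow> nat \<Rightarrow> real"
    and v :: "nat \<Rightarrow> nat \<Rightarrow> ('a \<Rightarrow>\<^sub>L real)"
    and w :: "nat \<Rightarrow> nat \<Rightarrow> ('b \<Rightarrow>\<^sub>L real)"
  assumes smooth: "smooth_space TYPE('a)"
    and unif_conv: "uniformly_convex_space TYPE('a)"
    and y_range: "y \<in> range (blinfun_apply A)"
    and p_gt: "1 < p" and r_gt: "1 < r"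
    and J_dual: "\<forall>z. J z \<in> duality_set p z"
    and Jps_dual: "\<forall>f. Jps f \<in> dual_duality_set (conj_exp p) f"
    and Jps_J: "\<forall>z. Jps (J z) = z"
    and J_Jps: "\<forall>f. J (Jps f) = f"
    and Jr_dual: "\<forall>u. Jr u \<in> duality_set r u"
    and N_pos: "1 \<le> N"
    and x0: "J (x 0) \<in> closure (range (adj A))"
    and not_stopped: "\<forall>j\<le>n. blinfun_apply A (x j) - y \<noteq> 0"
    and s_min: "\<forall>j\<le>n. \<forall>\<sigma>::nat \<Rightarrow> real.
        norm (adj A (Jr (blinfun_apply A (x j) - y)) - (\<Sum>k=1..min N j. s j k *\<^sub>R v (j - 1) k)) powr conj_exp p
        \<le> norm (adj A (Jr (blinfun_apply A (x j) - y)) - (\<Sum>k=1..min N j. \<sigma> k *\<^sub>R v (j - 1) k)) powr conj_exp p"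
    and v_new: "\<forall>j\<le>n. v j (Nn N j) =
        adj A (Jr (blinfun_apply A (x j) - y)) - (\<Sum>k=1..min N j. s j k *\<^sub>R v (j - 1) k)"
    and w_new: "\<forall>j\<le>n. w j (Nn N j) =
        Jr (blinfun_apply A (x j) - y) - (\<Sum>k=1..min N j. s j k *\<^sub>R w (j - 1) k)"
    and v_shift: "\<forall>j\<le>n. \<forall>k. 1 \<le> k \<and> k < Nn N j \<longrightarrow> v j k = v (j - 1) (k + min N j + 1 - Nn N j)"
    and w_shift: "\<forall>j\<le>n. \<forall>k. 1 \<le> k \<and> k < Nn N j \<longrightarrow> w j k = w (j - 1) (k + min N j + 1 - Nn N j)"
    and t_min: "\<forall>j\<le>n. \<forall>\<tau>::nat \<Rightarrow> real.
        hfun p (J (x j)) (Nn N j) (v j) (\<lambda>k. blinfun_apply (w j k) y) (tt j)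
        \<le> hfun p (J (x j)) (Nn N j) (v j) (\<lambda>k. blinfun_apply (w j k) y) \<tau>"
    and x_next: "\<forall>j\<le>n. x (Suc j) = Jps (J (x j) - (\<Sum>k=1..Nn N j. tt j k *\<^sub>R v j k))"
  shows "\<exists>(t::nat \<Rightarrow> real) S. 0 < S \<and>
           hfun p (J (x n)) (Nn N n) (v n) (\<lambda>k. blinfun_apply (w n k) y) t
             \<le> hfun p (J (x n)) (Nn N n) (v n) (\<lambda>k. blinfun_apply (w n k) y) (\<lambda>_. 0) - S \<and>
           (\<forall>z. blinfun_apply A z = y \<longrightarrow> bregman p J (x (Suc n)) z \<le> bregman p J (x n) z - S)"
proof -
  define q where "q = conj_exp p"
  have q1: "1 < q" using p_gt by (simp add: q_def conj_exp_def)
  have Jd: "\<forall>f. Jps f \<in> dual_duality_set q f" using Jps_dual by (simp add: q_def)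
  have nJ: "norm (J z) = norm z powr (p - 1)" for z using J_dual by (auto simp: duality_set_def)
  have normp: "norm z powr p = norm (J z) powr q" for z
  proof -
    have "(p - 1) * q = p" using p_gt by (simp add: q_def conj_exp_def)
    thus ?thesis by (simp add: nJ powr_powr)
  qed
  have inv: "\<forall>k. 1 \<le> k \<and> k \<le> Nn N j \<longrightarrow> v j k = adj A (w j k)" if "j \<le> n" for j
    using that
  proof (induction j)
    case 0
    have "Nn N 0 = 1" using N_pos by (simp add: Nn_def)
    moreover have "v 0 (Nn N 0) = adj A (w 0 (Nn N 0))"
      using v_new w_new by (simp add: adj_lin)
    ultimately show ?case by auto
  next
    case (Suc j)
    have IH: "\<forall>k. 1 \<le> k \<and> k \<le> Nn N j \<longrightarrow> v j k = adj A (w j k)" using Suc by simp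
    have mN: "min N (Suc j) = Nn N j" by (simp add: Nn_def)
    have top: "v (Suc j) (Nn N (Suc j)) = adj A (w (Suc j) (Nn N (Suc j)))"
    proof -
      have "v (Suc j) (Nn N (Suc j)) = adj A (Jr (blinfun_apply A (x (Suc j)) - y))
              - (\<Sum>k=1..min N (Suc j). s (Suc j) k *\<^sub>R v j k)"
        using v_new Suc.prems by auto
      also have "(\<Sum>k=1..min N (Suc j). s (Suc j) k *\<^sub>R v j k) = (\<Sum>k=1..min N (Suc j). s (Suc j) k *\<^sub>R adj A (w j k))"
        using IH mN by (intro sum.cong) auto
      also have "adj A (Jr (blinfun_apply A (x (Suc j)) - y)) - \<dots> = adj A (w (Suc j) (Nn N (Suc j)))"
        using w_new Suc.prems by (simp add: adj_lin)
      finally show ?thesis .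
    qed
    show ?case
    proof (intro allI impI)
      fix k assume k: "1 \<le> k \<and> k \<le> Nn N (Suc j)"
      show "v (Suc j) k = adj A (w (Suc j) k)"
      proof (cases "k = Nn N (Suc j)")
        case True thus ?thesis using top by simp
      next
        case False
        hence kl: "k < Nn N (Suc j)" using k by simp
        define k' where "k' = k + min N (Suc j) + 1 - Nn N (Suc j)"
        have k'r: "1 \<le> k' \<and> k' \<le> Nn N j" using k kl by (auto simp: k'_def Nn_def)
        have "v (Suc j) k = v j k'" using v_shift Suc.prems k kl by (auto simp: k'_def)
        also have "\<dots> = adj A (w j k')" using IH k'r by auto
        also have "w j k' = w (Suc j) k" using w_shift Suc.prems k kl by (auto simp: k'_def)
        finally show ?thesis .
      qed
    qed
  qed
  define m where "m = Nn N n"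
  define f0 where "f0 = J (x n)"
  have m1: "1 \<le> m" using N_pos by (simp add: m_def Nn_def)
  have xn: "Jps f0 = x n" using Jps_J by (simp add: f0_def)
  define H where "H t = hfun p (J (x n)) (Nn N n) (v n) (\<lambda>k. blinfun_apply (w n k) y) t" for t
  have H0: "H (\<lambda>_. 0) = (1/q) * norm f0 powr q" by (simp add: H_def hfun_def q_def f0_def)
  define r0 where "r0 = blinfun_apply A (x n) - y"
  have r0nz: "r0 \<noteq> 0" using not_stopped by (simp add: r0_def)
  have orth: "blinfun_apply (w (n - 1) k) r0 = 0" if n1: "1 \<le> n" and k: "1 \<le> k" "k \<le> Nn N (n - 1)" for k
  proof -
    define j where "j = n - 1"
    have jn: "j \<le> n" "Suc j = n" using n1 by (auto simp: j_def)
    have kj: "k \<in> {1..Nn N j}" using k by (simp add: j_def)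
    define \<beta> where "\<beta> i = blinfun_apply (w j i) y" for i
    have f1: "J (x j) - (\<Sum>i=1..Nn N j. tt j i *\<^sub>R v j i) = f0"
      using x_next jn J_Jps by (metis f0_def order_refl)
    have key: "(1/q) * norm f0 powr q \<le> (1/q) * norm (f0 + (-d) *\<^sub>R v j k) powr q + d * \<beta> k" for d
    proof -
      have "hfun p (J (x j)) (Nn N j) (v j) \<beta> (tt j)
          \<le> hfun p (J (x j)) (Nn N j) (v j) \<beta> (\<lambda>i. tt j i + (if i = k then d else 0))"
        using t_min jn(1) unfolding \<beta>_def by blast
      also have "\<dots> = (1/q) * norm (f0 + (-d) *\<^sub>R v j k) powr q + (\<Sum>i=1..Nn N j. tt j i * \<beta> i) + d * \<beta> k"
        unfolding hfun_shift[OF kj] f1 q_def by simp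
      finally show ?thesis unfolding hfun_def f1 q_def by simp
    qed
    have a: "0 \<le> blinfun_apply (- v j k) (Jps f0) + \<beta> k"
      by (rule first_order_ge[OF unif_conv q1 Jd]) (use key in simp)
    have b: "0 \<le> blinfun_apply (v j k) (Jps f0) + (- \<beta> k)"
    proof (rule first_order_ge[OF unif_conv q1 Jd], intro allI impI)
      fix \<delta> :: real assume "0 < \<delta>"
      show "(1/q) * norm f0 powr q \<le> (1/q) * norm (f0 + \<delta> *\<^sub>R v j k) powr q + \<delta> * - \<beta> k"
        using key[of "-\<delta>"] by simp
    qed
    have "blinfun_apply (v j k) (x n) = \<beta> k" using a b xn by (simp add: blinfun.minus_left)
    moreover have "v j k = adj A (w j k)" using inv[OF jn(1)] k by (simp add: j_def)
    ultimately show ?thesis by (simp add: adj_apply r0_def \<beta>_def blinfun.diff_right j_def)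
  qed
  have wm: "blinfun_apply (w n m) r0 = norm r0 powr r"
  proof -
    have "w n m = Jr r0 - (\<Sum>k=1..min N n. s n k *\<^sub>R w (n - 1) k)"
      using w_new by (simp add: m_def r0_def)
    moreover have "(\<Sum>k=1..min N n. s n k * blinfun_apply (w (n - 1) k) r0) = 0"
    proof (cases "n = 0")
      case True thus ?thesis by simp
    next
      case False
      hence "min N n = Nn N (n - 1)" by (simp add: Nn_def)
      thus ?thesis using orth False by (intro sum.neutral) auto
    qed
    moreover have "blinfun_apply (Jr r0) r0 = norm r0 powr r" using Jr_dual by (auto simp: duality_set_def)
    ultimately show ?thesis by (simp add: blinfun.diff_left blinfun.sum_left blinfun.scaleR_left)
  qed
  have vm: "v n m = adj A (w n m)" using inv[of n] m1 by (simp add: m_def)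
  have neg: "blinfun_apply (- v n m) (Jps f0) + blinfun_apply (w n m) y < 0"
  proof -
    have "blinfun_apply (- v n m) (Jps f0) + blinfun_apply (w n m) y = - blinfun_apply (w n m) r0"
      by (simp add: xn vm adj_apply blinfun.minus_left r0_def blinfun.diff_right)
    also have "\<dots> < 0" using wm r0nz by simp
    finally show ?thesis .
  qed
  obtain \<delta> where d0: "0 < \<delta>" and dd: "(1/q) * norm (f0 + \<delta> *\<^sub>R (- v n m)) powr q + \<delta> * blinfun_apply (w n m) y
       < (1/q) * norm f0 powr q"
    using descent[OF unif_conv q1 Jd neg] by blast
  have Hd: "H (\<lambda>i. 0 + (if i = m then \<delta> else 0)) < H (\<lambda>_. 0)"
  proof -
    have "H (\<lambda>i. 0 + (if i = m then \<delta> else 0)) = (1/q) * norm (f0 + \<delta> *\<^sub>R (- v n m)) powr q + \<delta> * blinfun_apply (w n m) y"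
      unfolding H_def using m1 by (subst hfun_shift) (auto simp: m_def q_def f0_def)
    thus ?thesis using dd H0 by simp
  qed
  have Htt: "H (tt n) \<le> H (\<lambda>i. 0 + (if i = m then \<delta> else 0))"
    using t_min unfolding H_def by blast
  define S where "S = H (\<lambda>_. 0) - H (tt n)"
  have S0: "0 < S" using Hd Htt by (simp add: S_def)
  have breg: "bregman p J (x (Suc n)) z \<le> bregman p J (x n) z - S" if Az: "blinfun_apply A z = y" for z
  proof -
    define \<xi> where "\<xi> = f0 - (\<Sum>k=1..m. tt n k *\<^sub>R v n k)"
    have Jx1: "J (x (Suc n)) = \<xi>" using x_next J_Jps by (simp add: \<xi>_def m_def f0_def)
    have vz: "blinfun_apply (v n k) z = blinfun_apply (w n k) y" if "k \<in> {1..m}" for k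
      using inv[of n] that by (auto simp: m_def adj_apply Az)
    have \<xi>z: "blinfun_apply \<xi> z = blinfun_apply f0 z - (\<Sum>k=1..m. tt n k * blinfun_apply (w n k) y)"
      unfolding \<xi>_def using vz by (simp add: blinfun.diff_left blinfun.sum_left blinfun.scaleR_left)
    have Htt': "H (tt n) = (1/q) * norm \<xi> powr q + (\<Sum>k=1..m. tt n k * blinfun_apply (w n k) y)"
      by (simp add: H_def hfun_def q_def \<xi>_def m_def f0_def)
    have "bregman p J (x (Suc n)) z = H (tt n) - blinfun_apply f0 z + (1/p) * norm z powr p"
      unfolding bregman_def normp Jx1 Htt' \<xi>z by (simp add: q_def)
    moreover have "bregman p J (x n) z = H (\<lambda>_. 0) - blinfun_apply f0 z + (1/p) * norm z powr p"
      unfolding bregman_def normp H0 by (simp add: q_def f0_def)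
    ultimately show ?thesis by (simp add: S_def)
  qed
  show ?thesis
    using S0 breg by (intro exI[of _ "tt n"] exI[of _ S]) (simp add: S_def H_def)
qed

end
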